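(* Let $(R,\mathcal{T})$ and $(S,\widetilde{\mathcal{T}})$ be transverse étale equivalence relations on a compact, metrizable, zero-dimensional space $X$. Transfer the topology of $R\times_XS$ to $R\vee S$ via the bijection $r\times s:R\times_XS\to R\vee S$, $((x,y),(y,z))\mapsto(x,z)$, and call the resulting topology $\mathcal{W}$. Then $(R\vee S,\mathcal{W})$ is an étale equivalence relation on $X$; if $R$ and $S$ are CEERs, then $(R\vee S,\mathcal{W})$ is a CEER. Moreover, $\mathcal{W}$ is the unique étale topology on $R\vee S$ whose relative topologies on $R$ and $S$ are $\mathcal{T}$ and $\widetilde{\mathcal{T}}$ respectively, and $R$ and $S$ are both open subsets of $(R\vee S,\mathcal{W})$.
   Context: An étale equivalence relation on $X$ is a countable equivalence relation $R\subset X\times X$ with a locally compact, Hausdorff, second countable topology in which the product $(x,y)\cdot(y,z)=(x,z)$ of composable pairs is continuous (relative topology from $R\times R$), the inverse $(x,y)\mapsto(y,x)$ is a homeomorphism, and the range map $r(x,y)=x$ is a local homeomorphism $R\to X$. A CEER is a compact étale equivalence relation. $R\vee S$ is the equivalence relation generated by $R$ and $S$. $R\times_XS=\{((x,y),(y,z)):(x,y)\in R,(y,z)\in S\}$ with the relative topology from $R\times S$, with $r((x,y),(y,z))=x$, $s((x,y),(y,z))=z$. $R$ and $S$ are transverse if $R\cap S=\Delta_X$ and there is a homeomorphism $h:R\times_XS\to S\times_XR$ with $r\circ h=r$, $s\circ h=s$; for transverse $R,S$ the map $r\times s:R\times_XS\to R\vee S$ is a bijection. *)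

theory Defs
  imports "HOL-Analysis.Analysis"
begin

definition local_homeomorphism_map :: "'a topology \<Rightarrow> 'b topology \<Rightarrow> ('a \<Rightarrow> 'b) \<Rightarrow> bool" where
  "local_homeomorphism_map A B f \<longleftrightarrow>
     f ` topspace A \<subseteq> topspace B \<and>
     (\<forall>p\<in>topspace A. \<exists>U. openin A U \<and> p \<in> U \<and> openin B (f ` U) \<and>
        homeomorphic_map (subtopology A U) (subtopology B (f ` U)) f)"

definition countable_equiv_rel :: "'a set \<Rightarrow> ('a \<times> 'a) set \<Rightarrow> bool" where
  "countable_equiv_rel X R \<longleftrightarrow> equiv X R \<and> (\<forall>x\<in>X. countable (R `` {x}))"

definition fibred :: "('a \<times> 'a) set \<Rightarrow> ('a \<times> 'a) set \<Rightarrow> (('a \<times> 'a) \<times> ('a \<times> 'a)) set" where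
  "fibred R S = {(p, q). p \<in> R \<and> q \<in> S \<and> snd p = fst q}"

definition fibred_top :: "('a \<times> 'a) topology \<Rightarrow> ('a \<times> 'a) topology \<Rightarrow>
    (('a \<times> 'a) \<times> ('a \<times> 'a)) topology" where
  "fibred_top TR TS = subtopology (prod_topology TR TS) (fibred (topspace TR) (topspace TS))"

definition rs_map :: "('a \<times> 'a) \<times> ('a \<times> 'a) \<Rightarrow> 'a \<times> 'a" where
  "rs_map w = (fst (fst w), snd (snd w))"

definition etale_eqrel :: "'a topology \<Rightarrow> ('a \<times> 'a) set \<Rightarrow> ('a \<times> 'a) topology \<Rightarrow> bool" where
  "etale_eqrel X R T \<longleftrightarrow>
     countable_equiv_rel (topspace X) R \<and> topspace T = R \<and>
     locally_compact_space T \<and> Hausdorff_space T \<and> second_countable T \<and>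
     continuous_map (fibred_top T T) T rs_map \<and>
     homeomorphic_map T T (\<lambda>(x, y). (y, x)) \<and>
     local_homeomorphism_map T X fst"

definition ceer :: "'a topology \<Rightarrow> ('a \<times> 'a) set \<Rightarrow> ('a \<times> 'a) topology \<Rightarrow> bool" where
  "ceer X R T \<longleftrightarrow> etale_eqrel X R T \<and> compact_space T"

definition join_rel :: "'a set \<Rightarrow> ('a \<times> 'a) set \<Rightarrow> ('a \<times> 'a) set \<Rightarrow> ('a \<times> 'a) set" where
  "join_rel X R S = \<Inter>{E. equiv X E \<and> R \<union> S \<subseteq> E}"

definition transverse :: "'a topology \<Rightarrow> ('a \<times> 'a) set \<Rightarrow> ('a \<times> 'a) topology \<Rightarrow>
    ('a \<times> 'a) set \<Rightarrow> ('a \<times> 'a) topology \<Rightarrow> bool" where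
  "transverse X R TR S TS \<longleftrightarrow>
     R \<inter> S = Id_on (topspace X) \<and>
     (\<exists>h. homeomorphic_map (fibred_top TR TS) (fibred_top TS TR) h \<and>
          (\<forall>w\<in>fibred R S. fst (fst (h w)) = fst (fst w) \<and> snd (snd (h w)) = snd (snd w)))"

text \<open>The topology W on R \<or> S transferred from R \<times>_X S via r \<times> s: a subset U of R \<or> S
  is open iff its preimage under r \<times> s is open in R \<times>_X S (for the bijection r \<times> s this is
  exactly the image topology).\<close>
definition join_top :: "'a topology \<Rightarrow> ('a \<times> 'a) set \<Rightarrow> ('a \<times> 'a) topology \<Rightarrow>
    ('a \<times> 'a) set \<Rightarrow> ('a \<times> 'a) topology \<Rightarrow> ('a \<times> 'a) topology" where
  "join_top X R TR S TS = topology (\<lambda>U. U \<subseteq> join_rel (topspace X) R S \<and>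
      openin (fibred_top TR TS) {w \<in> topspace (fibred_top TR TS). rs_map w \<in> U})"

end

theory Submission
  imports Defs
begin


lemma second_countable_prod:
  assumes "second_countable A" "second_countable B"
  shows "second_countable (prod_topology A B)"
proof -
  obtain BA where BA: "countable BA" "\<And>V. V \<in> BA \<Longrightarrow> openin A V"
    "\<And>U x. openin A U \<Longrightarrow> x \<in> U \<Longrightarrow> (\<exists>V \<in> BA. x \<in> V \<and> V \<subseteq> U)"
    using assms(1) unfolding second_countable_def by metis
  obtain BB where BB: "countable BB" "\<And>V. V \<in> BB \<Longrightarrow> openin B V"
    "\<And>U x. openin B U \<Longrightarrow> x \<in> U \<Longrightarrow> (\<exists>V \<in> BB. x \<in> V \<and> V \<subseteq> U)"
    using assms(2) unfolding second_countable_def by metis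
  show ?thesis unfolding second_countable_def
  proof (intro exI conjI ballI allI impI)
    show "countable ((\<lambda>(U,V). U \<times> V) ` (BA \<times> BB))"
      using BA(1) BB(1) by auto
    show "openin (prod_topology A B) W" if "W \<in> (\<lambda>(U,V). U \<times> V) ` (BA \<times> BB)" for W
      using that BA(2) BB(2) by (auto simp: openin_prod_Times_iff)
    fix W p assume "openin (prod_topology A B) W \<and> p \<in> W"
    then obtain U V where UV: "openin A U" "openin B V" "fst p \<in> U" "snd p \<in> V" "U \<times> V \<subseteq> W"
      unfolding openin_prod_topology_alt by (metis prod.collapse)
    obtain U' where "U' \<in> BA" "fst p \<in> U'" "U' \<subseteq> U" using BA(3) UV by metis
    moreover obtain V' where "V' \<in> BB" "snd p \<in> V'" "V' \<subseteq> V" using BB(3) UV by metis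
    ultimately show "\<exists>V\<in>(\<lambda>(U,V). U \<times> V) ` (BA \<times> BB). p \<in> V \<and> V \<subseteq> W"
      using UV(5) by (intro bexI[of _ "U' \<times> V'"]) (auto simp: mem_Times_iff)
  qed
qed

lemma homeo_restrict:
  assumes "homeomorphic_map (subtopology A U) (subtopology B (f ` U)) f"
    "U' \<subseteq> U" "U \<subseteq> topspace A" "f ` U \<subseteq> topspace B"
  shows "homeomorphic_map (subtopology A U') (subtopology B (f ` U')) f"
proof -
  have "homeomorphic_map (subtopology (subtopology A U) U') (subtopology (subtopology B (f ` U)) (f ` U')) f"
    by (rule homeomorphic_map_subtopologies[OF assms(1)]) (use assms in auto)
  moreover have "U \<inter> U' = U'" "f ` U \<inter> f ` U' = f ` U'" using assms(2) by auto
  ultimately show ?thesis by (simp add: subtopology_subtopology)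
qed

lemma lh_continuous:
  assumes "local_homeomorphism_map A B f"
  shows "continuous_map A B f"
  unfolding continuous_map_def
proof (intro conjI allI impI)
  show "f \<in> topspace A \<rightarrow> topspace B" using assms unfolding local_homeomorphism_map_def by auto
  fix V assume V: "openin B V"
  show "openin A {x \<in> topspace A. f x \<in> V}"
  proof (subst openin_subopen, intro ballI)
    fix p assume p: "p \<in> {x \<in> topspace A. f x \<in> V}"
    then obtain U where U: "openin A U" "p \<in> U" "openin B (f ` U)"
      "homeomorphic_map (subtopology A U) (subtopology B (f ` U)) f"
      using assms unfolding local_homeomorphism_map_def by blast
    have "continuous_map (subtopology A U) (subtopology B (f ` U)) f"
      using U(4) homeomorphic_imp_continuous_map by blast
    then have "openin (subtopology A U) {x \<in> topspace (subtopology A U). f x \<in> V \<inter> f ` U}"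
      unfolding continuous_map_def using V U(3)
      by (metis openin_open_subtopology openin_Int inf_le2)
    then have "openin A {x \<in> topspace (subtopology A U). f x \<in> V \<inter> f ` U}"
      using U(1) openin_open_subtopology by blast
    moreover have "{x \<in> topspace (subtopology A U). f x \<in> V \<inter> f ` U} = {x \<in> U. f x \<in> V}"
      using openin_subset[OF U(1)] by auto
    ultimately show "\<exists>T. openin A T \<and> p \<in> T \<and> T \<subseteq> {x \<in> topspace A. f x \<in> V}"
      using p U(2) openin_subset[OF U(1)] by (intro exI[of _ "{x \<in> U. f x \<in> V}"]) auto
  qed
qed

lemma lh_open_sub:
  assumes "openin A U" "openin B (f ` U)"
    "homeomorphic_map (subtopology A U) (subtopology B (f ` U)) f" "openin A Q" "Q \<subseteq> U"
  shows "openin B (f ` Q)"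
proof -
  have "openin (subtopology A U) Q" using assms openin_open_subtopology by blast
  then have "openin (subtopology B (f ` U)) (f ` Q)"
    using homeomorphic_imp_open_map[OF assms(3)] unfolding open_map_def by blast
  then show ?thesis using assms(2) openin_open_subtopology by blast
qed

lemma lh_restrict_nbhd:
  assumes "local_homeomorphism_map A B f" "openin A T" "p \<in> T"
  obtains U where "openin A U" "p \<in> U" "U \<subseteq> T" "openin B (f ` U)"
     "homeomorphic_map (subtopology A U) (subtopology B (f ` U)) f"
proof -
  obtain U where U: "openin A U" "p \<in> U" "openin B (f ` U)"
      "homeomorphic_map (subtopology A U) (subtopology B (f ` U)) f"
    using assms openin_subset unfolding local_homeomorphism_map_def by blast
  show ?thesis
  proof (rule that[of "U \<inter> T"])
    show "openin A (U \<inter> T)" using U assms by auto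
    show "openin B (f ` (U \<inter> T))" using lh_open_sub[OF U(1,3,4)] U assms by auto
    show "homeomorphic_map (subtopology A (U \<inter> T)) (subtopology B (f ` (U \<inter> T))) f"
      by (rule homeo_restrict[OF U(4)]) (use U openin_subset in auto)
  qed (use U assms in auto)
qed

lemma lh_subtop:
  assumes "local_homeomorphism_map A B f" "openin A T"
  shows "local_homeomorphism_map (subtopology A T) B f"
  unfolding local_homeomorphism_map_def
proof (intro conjI ballI)
  show "f ` topspace (subtopology A T) \<subseteq> topspace B"
    using assms unfolding local_homeomorphism_map_def by auto
  fix p assume "p \<in> topspace (subtopology A T)"
  then obtain U where U: "openin A U" "p \<in> U" "U \<subseteq> T" "openin B (f ` U)"
     "homeomorphic_map (subtopology A U) (subtopology B (f ` U)) f"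
    using lh_restrict_nbhd[OF assms] by auto
  show "\<exists>U. openin (subtopology A T) U \<and> p \<in> U \<and> openin B (f ` U) \<and>
         homeomorphic_map (subtopology (subtopology A T) U) (subtopology B (f ` U)) f"
    using U assms(2) by (intro exI[of _ U]) (auto simp: openin_open_subtopology subtopology_subtopology Int_absorb1)
qed

lemma lh_compose:
  assumes "local_homeomorphism_map A B f" "local_homeomorphism_map B C g"
  shows "local_homeomorphism_map A C (g \<circ> f)"
  unfolding local_homeomorphism_map_def
proof (intro conjI ballI)
  show "(g \<circ> f) ` topspace A \<subseteq> topspace C"
    using assms unfolding local_homeomorphism_map_def by auto
  fix p assume p: "p \<in> topspace A"
  then have fp: "f p \<in> topspace B" using assms unfolding local_homeomorphism_map_def by auto
  obtain V where V: "openin B V" "f p \<in> V" "openin C (g ` V)"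
      "homeomorphic_map (subtopology B V) (subtopology C (g ` V)) g"
    using assms(2) fp unfolding local_homeomorphism_map_def by blast
  have "openin A {x \<in> topspace A. f x \<in> V}"
    using lh_continuous[OF assms(1)] V(1) by (simp add: continuous_map_def)
  then obtain U where U: "openin A U" "p \<in> U" "U \<subseteq> {x \<in> topspace A. f x \<in> V}" "openin B (f ` U)"
     "homeomorphic_map (subtopology A U) (subtopology B (f ` U)) f"
    using lh_restrict_nbhd[OF assms(1)] p V(2) by (metis (mono_tags, lifting) mem_Collect_eq)
  have fU: "f ` U \<subseteq> V" using U(3) by auto
  have h2: "homeomorphic_map (subtopology B (f ` U)) (subtopology C (g ` f ` U)) g"
    by (rule homeo_restrict[OF V(4) fU]) (use V openin_subset in auto)
  show "\<exists>U. openin A U \<and> p \<in> U \<and> openin C ((g \<circ> f) ` U) \<and>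
         homeomorphic_map (subtopology A U) (subtopology C ((g \<circ> f) ` U)) (g \<circ> f)"
  proof (intro exI conjI)
    show "openin C ((g \<circ> f) ` U)" using lh_open_sub[OF V(1,3,4) U(4) fU] by (simp add: image_comp)
    show "homeomorphic_map (subtopology A U) (subtopology C ((g \<circ> f) ` U)) (g \<circ> f)"
      using homeomorphic_map_compose[OF U(5) h2] by (simp add: image_comp)
  qed (use U in auto)
qed

lemma homeo_lh:
  assumes "homeomorphic_map A B f"
  shows "local_homeomorphism_map A B f"
  unfolding local_homeomorphism_map_def
proof (intro conjI ballI)
  have im: "f ` topspace A = topspace B"
    using assms homeomorphic_imp_surjective_map by blast
  then show "f ` topspace A \<subseteq> topspace B" by simp
  fix p assume "p \<in> topspace A"
  then show "\<exists>U. openin A U \<and> p \<in> U \<and> openin B (f ` U) \<and>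
         homeomorphic_map (subtopology A U) (subtopology B (f ` U)) f"
    using assms im by (intro exI[of _ "topspace A"]) (simp add: subtopology_topspace)
qed

lemma lh_unique:
  assumes "topspace A = topspace B" "continuous_map A B id"
    "local_homeomorphism_map A X f" "local_homeomorphism_map B X f"
  shows "A = B"
proof (rule topology_eq[THEN iffD2], intro allI iffI)
  fix Q assume "openin B Q"
  then show "openin A Q" using assms(2) openin_subset[of B Q] unfolding continuous_map_def
    by (metis (no_types, lifting) Collect_cong Int_def Int_absorb1 assms(1) id_apply inf_set_def)
next
  fix Q assume Q: "openin A Q"
  show "openin B Q"
  proof (subst openin_subopen, intro ballI)
    fix p assume p: "p \<in> Q"
    obtain UB where UB: "openin B UB" "p \<in> UB" "openin X (f ` UB)"
      "homeomorphic_map (subtopology B UB) (subtopology X (f ` UB)) f"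
      using assms(4) p openin_subset[OF Q] assms(1) unfolding local_homeomorphism_map_def by blast
    have UBA: "openin A UB" using UB(1) assms(2) openin_subset[OF UB(1)] assms(1)
      unfolding continuous_map_def by (metis (no_types, lifting) Collect_cong Int_def Int_absorb1 id_apply inf_set_def)
    obtain U where U: "openin A U" "p \<in> U" "U \<subseteq> Q \<inter> UB" "openin X (f ` U)"
     "homeomorphic_map (subtopology A U) (subtopology X (f ` U)) f"
      using lh_restrict_nbhd[OF assms(3), of "Q \<inter> UB" p] Q UBA p UB(2) by auto
    have injB: "inj_on f UB"
      using homeomorphic_imp_injective_map[OF UB(4)] openin_subset[OF UB(1)] by (simp add: Int_absorb1)
    define T where "T = {x \<in> topspace B. f x \<in> f ` U} \<inter> UB"
    have "openin B T" unfolding T_def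
      using lh_continuous[OF assms(4)] U(4) UB(1) by (intro openin_Int) (auto simp: continuous_map_def)
    moreover have "T \<subseteq> Q"
    proof
      fix x assume "x \<in> T"
      then obtain u where "u \<in> U" "f x = f u" "x \<in> UB" unfolding T_def by auto
      then have "x = u" using injB U(3) by (auto dest: inj_onD)
      then show "x \<in> Q" using \<open>u \<in> U\<close> U(3) by auto
    qed
    moreover have "p \<in> T" unfolding T_def using U(2) UB(1,2) openin_subset by auto
    ultimately show "\<exists>T. openin B T \<and> p \<in> T \<and> T \<subseteq> Q" by blast
  qed
qed



lemma lh_cong:
  assumes "local_homeomorphism_map A B f" "\<And>x. x \<in> topspace A \<Longrightarrow> f x = g x"
  shows "local_homeomorphism_map A B g"
  unfolding local_homeomorphism_map_def
proof (intro conjI ballI)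
  show "g ` topspace A \<subseteq> topspace B" using assms unfolding local_homeomorphism_map_def by auto
  fix p assume p: "p \<in> topspace A"
  then obtain U where U: "openin A U" "p \<in> U" "openin B (f ` U)"
      "homeomorphic_map (subtopology A U) (subtopology B (f ` U)) f"
    using assms unfolding local_homeomorphism_map_def by blast
  have e: "f ` U = g ` U" by (intro image_cong refl) (use assms(2) openin_subset[OF U(1)] in auto)
  show "\<exists>U. openin A U \<and> p \<in> U \<and> openin B (g ` U) \<and>
         homeomorphic_map (subtopology A U) (subtopology B (g ` U)) g"
    using U e assms(2) openin_subset[OF U(1)]
    by (intro exI[of _ U]) (auto intro: homeomorphic_map_eq)
qed

lemma fibred_top_space: "topspace (fibred_top A B) = fibred (topspace A) (topspace B)"
  unfolding fibred_top_def fibred_def by auto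

lemma cont_fibred_fst: "continuous_map (fibred_top A B) A fst"
  unfolding fibred_top_def by (intro continuous_map_from_subtopology continuous_map_fst)

lemma cont_fibred_snd: "continuous_map (fibred_top A B) B snd"
  unfolding fibred_top_def by (intro continuous_map_from_subtopology continuous_map_snd)

lemma cont_into_fibred:
  assumes "continuous_map Z A f" "continuous_map Z B g" "\<And>z. z \<in> topspace Z \<Longrightarrow> snd (f z) = fst (g z)"
  shows "continuous_map Z (fibred_top A B) (\<lambda>z. (f z, g z))"
proof -
  have "f z \<in> topspace A" "g z \<in> topspace B" if "z \<in> topspace Z" for z
    using assms(1,2) that continuous_map_image_subset_topspace by blast+
  then show ?thesis
    unfolding fibred_top_def continuous_map_in_subtopology
    using assms by (auto intro!: continuous_map_pairedI simp: fibred_def)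
qed

lemma cont_local:
  assumes "\<And>x. x \<in> topspace X \<Longrightarrow> \<exists>Q. openin X Q \<and> x \<in> Q \<and> continuous_map (subtopology X Q) Y f"
  shows "continuous_map X Y f"
  unfolding continuous_map_def
proof (intro conjI allI impI)
  show "f \<in> topspace X \<rightarrow> topspace Y"
  proof
    fix x assume "x \<in> topspace X"
    then obtain Q where "openin X Q" "x \<in> Q" "continuous_map (subtopology X Q) Y f" using assms by blast
    then show "f x \<in> topspace Y" using continuous_map_image_subset_topspace openin_subset by fastforce
  qed
  fix V assume V: "openin Y V"
  show "openin X {x \<in> topspace X. f x \<in> V}"
  proof (subst openin_subopen, intro ballI)
    fix x assume x: "x \<in> {x \<in> topspace X. f x \<in> V}"
    then obtain Q where Q: "openin X Q" "x \<in> Q" "continuous_map (subtopology X Q) Y f" using assms by blast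
    then have "openin (subtopology X Q) {y \<in> topspace (subtopology X Q). f y \<in> V}"
      using V by (simp add: continuous_map_def)
    then have "openin X {y \<in> topspace (subtopology X Q). f y \<in> V}"
      using Q(1) openin_open_subtopology by blast
    then show "\<exists>T. openin X T \<and> x \<in> T \<and> T \<subseteq> {x \<in> topspace X. f x \<in> V}"
      using x Q(2) by (intro exI[of _ "{y \<in> topspace (subtopology X Q). f y \<in> V}"]) auto
  qed
qed

context
  fixes X :: "'a topology" and R :: "('a \<times> 'a) set" and T
  assumes E: "etale_eqrel X R T"
begin

lemma E_equiv: "equiv (topspace X) R" and E_top: "topspace T = R"
  and E_rs: "continuous_map (fibred_top T T) T rs_map"
  and E_swap: "homeomorphic_map T T (\<lambda>(x, y). (y, x))"
  and E_lh: "local_homeomorphism_map T X fst"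
  and E_H: "Hausdorff_space T" and E_lc: "locally_compact_space T" and E_sc: "second_countable T"
  using E unfolding etale_eqrel_def countable_equiv_rel_def by auto

lemma E_sub: "R \<subseteq> topspace X \<times> topspace X"
  using E_equiv unfolding equiv_def refl_on_def by auto

lemma E_refl: "x \<in> topspace X \<Longrightarrow> (x, x) \<in> R"
  using E_equiv unfolding equiv_def refl_on_def by auto

lemma E_sym: "(x, y) \<in> R \<Longrightarrow> (y, x) \<in> R"
  using E_equiv unfolding equiv_def sym_def by auto

lemma E_trans: "(x, y) \<in> R \<Longrightarrow> (y, z) \<in> R \<Longrightarrow> (x, z) \<in> R"
  using E_equiv unfolding equiv_def trans_def by blast

lemma E_fst: "continuous_map T X fst"
  using lh_continuous[OF E_lh] .

lemma E_swap_cont: "continuous_map T T (\<lambda>(x, y). (y, x))"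
  using E_swap homeomorphic_imp_continuous_map by blast

lemma E_snd_lh: "local_homeomorphism_map T X snd"
proof -
  have "local_homeomorphism_map T X (fst \<circ> (\<lambda>(x, y). (y, x)))"
    by (rule lh_compose[OF homeo_lh[OF E_swap] E_lh])
  then show ?thesis by (rule lh_cong) auto
qed

lemma E_snd: "continuous_map T X snd"
  using lh_continuous[OF E_snd_lh] .

lemma E_unit: "continuous_map X T (\<lambda>x. (x, x))"
proof (rule cont_local)
  fix x assume x: "x \<in> topspace X"
  then have xx: "(x, x) \<in> topspace T" using E_refl E_top by auto
  then obtain V where V: "openin T V" "(x,x) \<in> V" "openin X (fst ` V)"
      "homeomorphic_map (subtopology T V) (subtopology X (fst ` V)) fst"
    using E_lh unfolding local_homeomorphism_map_def by blast
  obtain g where g: "homeomorphic_maps (subtopology T V) (subtopology X (fst ` V)) fst g"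
    using V(4) homeomorphic_map_maps by blast
  have gc: "continuous_map (subtopology X (fst ` V)) T g"
    using g unfolding homeomorphic_maps_def
    using continuous_map_into_fulltopology by blast
  have VT: "V \<subseteq> topspace T" using openin_subset[OF V(1)] .
  have gV: "g y \<in> V \<and> fst (g y) = y" if "y \<in> fst ` V" for y
  proof -
    have "y \<in> topspace (subtopology X (fst ` V))" using that openin_subset[OF V(3)] by auto
    moreover have "continuous_map (subtopology X (fst ` V)) (subtopology T V) g"
      "\<forall>y \<in> topspace (subtopology X (fst ` V)). fst (g y) = y"
      using g unfolding homeomorphic_maps_def by auto
    ultimately show ?thesis using continuous_map_image_subset_topspace by (metis image_subset_iff topspace_subtopology IntE)
  qed
  have "continuous_map (subtopology X (fst ` V)) T (\<lambda>y. rs_map (g y, (\<lambda>(x, y). (y, x)) (g y)))"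
  proof (rule continuous_map_compose[OF _ E_rs, unfolded o_def])
    show "continuous_map (subtopology X (fst ` V)) (fibred_top T T) (\<lambda>y. (g y, (\<lambda>(x, y). (y, x)) (g y)))"
      by (rule cont_into_fibred[OF gc continuous_map_compose[OF gc E_swap_cont, unfolded o_def]])
         (auto split: prod.splits)
  qed
  moreover have "rs_map (g y, (\<lambda>(x, y). (y, x)) (g y)) = (y, y)" if "y \<in> topspace (subtopology X (fst ` V))" for y
    using gV[of y] that by (auto simp: rs_map_def split: prod.splits)
  ultimately have "continuous_map (subtopology X (fst ` V)) T (\<lambda>x. (x, x))"
    by (rule continuous_map_eq)
  then show "\<exists>Q. openin X Q \<and> x \<in> Q \<and> continuous_map (subtopology X Q) T (\<lambda>x. (x, x))"
    using V by (intro exI[of _ "fst ` V"]) force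
qed

lemma E_diag_open: "openin T (Id_on (topspace X))"
proof (subst openin_subopen, intro ballI)
  fix p assume "p \<in> Id_on (topspace X)"
  then obtain x where x: "x \<in> topspace X" "p = (x, x)" by (auto simp: Id_on_def)
  then have xx: "(x, x) \<in> topspace T" using E_refl E_top by auto
  then obtain V where V: "openin T V" "(x,x) \<in> V" "openin X (fst ` V)"
      "homeomorphic_map (subtopology T V) (subtopology X (fst ` V)) fst"
    using E_lh unfolding local_homeomorphism_map_def by blast
  have inj: "inj_on fst V"
    using homeomorphic_imp_injective_map[OF V(4)] openin_subset[OF V(1)] by (simp add: Int_absorb1)
  define Q' where "Q' = {y \<in> topspace X. (y, y) \<in> V}"
  have "openin X Q'" unfolding Q'_def using E_unit V(1) by (simp add: continuous_map_def)
  then have N: "openin T {q \<in> topspace T. fst q \<in> Q'}" using E_fst by (simp add: continuous_map_def)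
  define N where "N = {q \<in> topspace T. fst q \<in> Q'} \<inter> V"
  have "openin T N" unfolding N_def using N V(1) by auto
  moreover have "p \<in> N" unfolding N_def Q'_def using x xx V(2) by auto
  moreover have "N \<subseteq> Id_on (topspace X)"
  proof
    fix q assume q: "q \<in> N"
    then have "(fst q, fst q) \<in> V" "q \<in> V" "fst q \<in> topspace X" unfolding N_def Q'_def by auto
    then have "q = (fst q, fst q)" using inj by (metis fst_conv inj_onD)
    then show "q \<in> Id_on (topspace X)" using \<open>fst q \<in> topspace X\<close> by (metis Id_onI)
  qed
  ultimately show "\<exists>T'. openin T T' \<and> p \<in> T' \<and> T' \<subseteq> Id_on (topspace X)" by blast
qed

end


locale trctx =
  fixes X :: "'a topology" and R S :: "('a \<times> 'a) set" and TR TS :: "('a \<times> 'a) topology"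
  assumes ER: "etale_eqrel X R TR" and ES: "etale_eqrel X S TS"
    and TV: "transverse X R TR S TS" and HX: "Hausdorff_space X"
begin

lemma topF: "topspace (fibred_top TR TS) = fibred R S"
  by (simp add: fibred_top_space E_top[OF ER] E_top[OF ES])

lemma topF': "topspace (fibred_top TS TR) = fibred S R"
  by (simp add: fibred_top_space E_top[OF ER] E_top[OF ES])

lemma RS_Id: "R \<inter> S = Id_on (topspace X)"
  using TV unfolding transverse_def by auto

lemma k_ex: "\<exists>k. homeomorphic_map (fibred_top TS TR) (fibred_top TR TS) k \<and>
   (\<forall>w\<in>fibred S R. k w \<in> fibred R S \<and> fst (fst (k w)) = fst (fst w) \<and> snd (snd (k w)) = snd (snd w))"
proof -
  obtain h where h: "homeomorphic_map (fibred_top TR TS) (fibred_top TS TR) h"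
    "\<forall>w\<in>fibred R S. fst (fst (h w)) = fst (fst w) \<and> snd (snd (h w)) = snd (snd w)"
    using TV unfolding transverse_def by blast
  obtain k where k: "homeomorphic_maps (fibred_top TR TS) (fibred_top TS TR) h k"
    using h(1) homeomorphic_map_maps by blast
  have kc: "continuous_map (fibred_top TS TR) (fibred_top TR TS) k"
    and hk: "\<forall>y \<in> topspace (fibred_top TS TR). h (k y) = y"
    using k unfolding homeomorphic_maps_def by auto
  have "\<forall>w\<in>fibred S R. k w \<in> fibred R S \<and> fst (fst (k w)) = fst (fst w) \<and> snd (snd (k w)) = snd (snd w)"
  proof
    fix w assume w: "w \<in> fibred S R"
    then have kw: "k w \<in> fibred R S" using kc continuous_map_image_subset_topspace topF topF' by blast
    then show "k w \<in> fibred R S \<and> fst (fst (k w)) = fst (fst w) \<and> snd (snd (k w)) = snd (snd w)"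
      using h(2) hk w topF' by metis
  qed
  then show ?thesis using k homeomorphic_maps_map by blast
qed

definition "kk = (SOME k. homeomorphic_map (fibred_top TS TR) (fibred_top TR TS) k \<and>
   (\<forall>w\<in>fibred S R. k w \<in> fibred R S \<and> fst (fst (k w)) = fst (fst w) \<and> snd (snd (k w)) = snd (snd w)))"

lemma kk: "homeomorphic_map (fibred_top TS TR) (fibred_top TR TS) kk"
  "\<And>w. w\<in>fibred S R \<Longrightarrow> kk w \<in> fibred R S \<and> fst (fst (kk w)) = fst (fst w) \<and> snd (snd (kk w)) = snd (snd w)"
  using someI_ex[OF k_ex] unfolding kk_def by blast+

lemma kk_cont: "continuous_map (fibred_top TS TR) (fibred_top TR TS) kk"
  using kk(1) homeomorphic_imp_continuous_map by blast

lemma SR_RS: "(x, y) \<in> S \<Longrightarrow> (y, z) \<in> R \<Longrightarrow> \<exists>u. (x, u) \<in> R \<and> (u, z) \<in> S"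
  using kk(2)[of "((x,y),(y,z))"] unfolding fibred_def by (cases "kk ((x,y),(y,z))") auto

lemma J_eq: "join_rel (topspace X) R S = R O S"
proof -
  have eR: "equiv (topspace X) R" and eS: "equiv (topspace X) S"
    using E_equiv[OF ER] E_equiv[OF ES] .
  have eq: "equiv (topspace X) (R O S)"
  proof (rule equivI)
    show "R O S \<subseteq> topspace X \<times> topspace X" using E_sub[OF ER] E_sub[OF ES] by blast
    show "refl_on (topspace X) (R O S)"
      unfolding refl_on_def using E_sub[OF ER] E_sub[OF ES] E_refl[OF ER] E_refl[OF ES] by blast
    show "sym (R O S)"
    proof (rule symI)
      fix a b assume "(a, b) \<in> R O S"
      then obtain y where "(a, y) \<in> R" "(y, b) \<in> S" by auto
      then have "(b, y) \<in> S" "(y, a) \<in> R" using E_sym[OF ER] E_sym[OF ES] by auto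
      then show "(b, a) \<in> R O S" using SR_RS by blast
    qed
    show "trans (R O S)"
    proof (rule transI)
      fix a b c assume "(a, b) \<in> R O S" "(b, c) \<in> R O S"
      then obtain y y' where "(a, y) \<in> R" "(y, b) \<in> S" "(b, y') \<in> R" "(y', c) \<in> S" by auto
      moreover obtain u where "(y, u) \<in> R" "(u, y') \<in> S" using SR_RS[of y b y'] calculation by blast
      ultimately show "(a, c) \<in> R O S" using E_trans[OF ER] E_trans[OF ES] by blast
    qed
  qed
  have sub: "R \<union> S \<subseteq> R O S"
    using E_sub[OF ER] E_sub[OF ES] E_refl[OF ER] E_refl[OF ES] by blast
  have "R O S \<subseteq> E" if "equiv (topspace X) E" "R \<union> S \<subseteq> E" for E
    using that unfolding equiv_def trans_def by blast
  then show ?thesis unfolding join_rel_def using eq sub by blast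
qed

lemma m_inj: "inj_on rs_map (fibred R S)"
proof (rule inj_onI)
  fix v w assume v: "v \<in> fibred R S" and w: "w \<in> fibred R S" and e: "rs_map v = rs_map w"
  obtain x y z where vv: "v = ((x,y),(y,z))" "(x,y) \<in> R" "(y,z) \<in> S" using v unfolding fibred_def by auto
  obtain x' y' z' where ww: "w = ((x',y'),(y',z'))" "(x',y') \<in> R" "(y',z') \<in> S" using w unfolding fibred_def by auto
  have "x' = x" "z' = z" using e vv ww by (auto simp: rs_map_def)
  then have "(y, y') \<in> R" "(y, y') \<in> S" using vv ww E_sym[OF ER] E_trans[OF ER] E_sym[OF ES] E_trans[OF ES] by blast+
  then have "(y, y') \<in> Id_on (topspace X)" using RS_Id by blast
  then have "y = y'" by auto
  then show "v = w" using vv ww \<open>x' = x\<close> \<open>z' = z\<close> by simp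
qed

lemma m_im: "rs_map ` fibred R S = R O S"
  unfolding fibred_def rs_map_def by force

lemma m_in: "w \<in> fibred R S \<Longrightarrow> rs_map w \<in> R O S"
  using m_im by blast

abbreviation "W0 \<equiv> join_top X R TR S TS"
abbreviation "F \<equiv> fibred_top TR TS"

lemma openin_W0: "openin W0 U \<longleftrightarrow> U \<subseteq> R O S \<and> openin F {w \<in> topspace F. rs_map w \<in> U}"
proof -
  have "istopology (\<lambda>U. U \<subseteq> R O S \<and> openin F {w \<in> topspace F. rs_map w \<in> U})"
    unfolding istopology_def
  proof (rule conjI; intro allI impI)
    fix A B assume "A \<subseteq> R O S \<and> openin F {w \<in> topspace F. rs_map w \<in> A}"
      "B \<subseteq> R O S \<and> openin F {w \<in> topspace F. rs_map w \<in> B}"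
    moreover have "{w \<in> topspace F. rs_map w \<in> A \<inter> B} = {w \<in> topspace F. rs_map w \<in> A} \<inter> {w \<in> topspace F. rs_map w \<in> B}"
      by auto
    ultimately show "A \<inter> B \<subseteq> R O S \<and> openin F {w \<in> topspace F. rs_map w \<in> A \<inter> B}" by auto
  next
    fix K assume K: "\<forall>A\<in>K. A \<subseteq> R O S \<and> openin F {w \<in> topspace F. rs_map w \<in> A}"
    have "{w \<in> topspace F. rs_map w \<in> \<Union>K} = \<Union>((\<lambda>A. {w \<in> topspace F. rs_map w \<in> A}) ` K)" by auto
    then show "\<Union>K \<subseteq> R O S \<and> openin F {w \<in> topspace F. rs_map w \<in> \<Union>K}"
      using K by (auto intro!: openin_Union)
  qed
  then show ?thesis unfolding join_top_def J_eq by simp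
qed

lemma top_W0: "topspace W0 = R O S"
proof
  show "topspace W0 \<subseteq> R O S" using openin_W0[of "topspace W0"] by simp
  have e: "{w \<in> topspace F. rs_map w \<in> R O S} = topspace F" using m_in topF by auto
  have "openin W0 (R O S)" unfolding openin_W0 e by simp
  then show "R O S \<subseteq> topspace W0" using openin_subset by blast
qed

lemma m_homeo: "homeomorphic_map F W0 rs_map"
proof (rule bijective_open_imp_homeomorphic_map)
  show "continuous_map F W0 rs_map"
    unfolding continuous_map_def using openin_W0 top_W0 topF m_in by auto
  show "open_map F W0 rs_map"
    unfolding open_map_def
  proof (intro allI impI)
    fix V assume V: "openin F V"
    have VF: "V \<subseteq> fibred R S" using openin_subset[OF V] topF by simp
    have eqV: "{w \<in> topspace F. rs_map w \<in> rs_map ` V} = V"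
      using VF m_inj topF by (auto dest: inj_onD)
    have "rs_map ` V \<subseteq> R O S" using VF m_in by blast
    then show "openin W0 (rs_map ` V)" unfolding openin_W0 eqV using V by simp
  qed
  show "rs_map ` topspace F = topspace W0" using topF top_W0 m_im by simp
  show "inj_on rs_map (topspace F)" using topF m_inj by simp
qed

end


lemma fibred_iff: "w \<in> fibred A B \<longleftrightarrow> fst w \<in> A \<and> snd w \<in> B \<and> snd (fst w) = fst (snd w)"
  unfolding fibred_def by (cases w) auto

lemma rs_map_eq: "rs_map w = (fst (fst w), snd (snd w))"
  unfolding rs_map_def by simp

context trctx begin

lemma F_sub: "F = subtopology (prod_topology TR TS) (fibred R S)"
  unfolding fibred_top_def using E_top[OF ER] E_top[OF ES] by simp

lemma F_closed: "closedin (prod_topology TR TS) (fibred R S)"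
proof -
  have c1: "continuous_map (prod_topology TR TS) X (snd \<circ> fst)"
    by (rule continuous_map_compose[OF continuous_map_fst E_snd[OF ER]])
  have c2: "continuous_map (prod_topology TR TS) X (fst \<circ> snd)"
    by (rule continuous_map_compose[OF continuous_map_snd E_fst[OF ES]])
  have "closedin (prod_topology TR TS) {x \<in> topspace (prod_topology TR TS). (snd \<circ> fst) x = (fst \<circ> snd) x}"
    by (rule closedin_continuous_maps_eq[OF HX c1 c2])
  moreover have "{x \<in> topspace (prod_topology TR TS). (snd \<circ> fst) x = (fst \<circ> snd) x} = fibred R S"
    using E_top[OF ER] E_top[OF ES] by (auto simp: fibred_iff)
  ultimately show ?thesis by simp
qed

lemma F_H: "Hausdorff_space F"
  unfolding F_sub using E_H[OF ER] E_H[OF ES]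
  by (intro Hausdorff_space_subtopology) (simp add: Hausdorff_space_prod_topology)

lemma F_lc: "locally_compact_space F"
  unfolding F_sub using E_lc[OF ER] E_lc[OF ES] F_closed
  by (intro locally_compact_space_closed_subset) (simp_all add: locally_compact_space_prod_topology)

lemma F_sc: "second_countable F"
  unfolding F_sub using E_sc[OF ER] E_sc[OF ES]
  by (intro second_countable_subtopology second_countable_prod)

lemma F_compact: "compact_space TR \<Longrightarrow> compact_space TS \<Longrightarrow> compact_space F"
  unfolding F_sub using F_closed
  by (intro compact_space_subtopology closedin_compact_space) (simp_all add: compact_space_prod_topology)

lemma F_W0: "F homeomorphic_space W0"
  using m_homeo homeomorphic_map_imp_homeomorphic_space by blast

definition "gg = (SOME g. homeomorphic_maps F W0 rs_map g)"

lemma gg_maps: "homeomorphic_maps F W0 rs_map gg"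
  unfolding gg_def by (rule someI_ex[where P="\<lambda>g. homeomorphic_maps F W0 rs_map g"]) (use m_homeo homeomorphic_map_maps in blast)

lemma gg_homeo: "homeomorphic_map W0 F gg"
  using gg_maps homeomorphic_maps_map homeomorphic_maps_sym by blast

lemma gg_cont: "continuous_map W0 F gg"
  using gg_maps unfolding homeomorphic_maps_def by blast

lemma gg_facts:
  assumes "p \<in> R O S"
  shows "gg p \<in> fibred R S" "rs_map (gg p) = p" "fst (fst (gg p)) = fst p" "snd (snd (gg p)) = snd p"
proof -
  show "gg p \<in> fibred R S" using gg_cont assms top_W0 topF continuous_map_image_subset_topspace by blast
  show e: "rs_map (gg p) = p" using gg_maps assms top_W0 unfolding homeomorphic_maps_def by blast
  show "fst (fst (gg p)) = fst p" "snd (snd (gg p)) = snd p" using e unfolding rs_map_eq by (metis fst_conv snd_conv)+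
qed

lemma m_gg: "w \<in> fibred R S \<Longrightarrow> gg (rs_map w) = w"
  using gg_maps topF unfolding homeomorphic_maps_def by blast

lemma W0_props: "Hausdorff_space W0" "locally_compact_space W0" "second_countable W0"
  using F_W0 F_H F_lc F_sc homeomorphic_Hausdorff_space homeomorphic_locally_compact_space
    homeomorphic_space_second_countability by blast+

lemma W0_compact: "compact_space TR \<Longrightarrow> compact_space TS \<Longrightarrow> compact_space W0"
  using F_W0 F_compact homeomorphic_compact_space by blast

lemma W0_rs: "continuous_map (fibred_top W0 W0) W0 rs_map"
proof -
  let ?Z = "fibred_top W0 W0"
  have tZ: "topspace ?Z = fibred (R O S) (R O S)" by (simp add: fibred_top_space top_W0)
  define G1 where "G1 = (\<lambda>P::('a\<times>'a)\<times>('a\<times>'a). gg (fst P))"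
  define G2 where "G2 = (\<lambda>P::('a\<times>'a)\<times>('a\<times>'a). gg (snd P))"
  have G1c: "continuous_map ?Z F G1" unfolding G1_def
    using continuous_map_compose[OF cont_fibred_fst gg_cont] by (simp add: o_def)
  have G2c: "continuous_map ?Z F G2" unfolding G2_def
    using continuous_map_compose[OF cont_fibred_snd gg_cont] by (simp add: o_def)
  have ac: "continuous_map ?Z TR (\<lambda>P. fst (G1 P))"
    using continuous_map_compose[OF G1c cont_fibred_fst] by (simp add: o_def)
  have bc: "continuous_map ?Z TS (\<lambda>P. snd (G1 P))"
    using continuous_map_compose[OF G1c cont_fibred_snd] by (simp add: o_def)
  have cc: "continuous_map ?Z TR (\<lambda>P. fst (G2 P))"
    using continuous_map_compose[OF G2c cont_fibred_fst] by (simp add: o_def)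
  have dc: "continuous_map ?Z TS (\<lambda>P. snd (G2 P))"
    using continuous_map_compose[OF G2c cont_fibred_snd] by (simp add: o_def)
  have mem: "G1 P \<in> fibred R S \<and> G2 P \<in> fibred R S \<and>
     fst (fst (G1 P)) = fst (fst P) \<and> snd (snd (G1 P)) = snd (fst P) \<and>
     fst (fst (G2 P)) = fst (snd P) \<and> snd (snd (G2 P)) = snd (snd P) \<and>
     snd (fst P) = fst (snd P)" if "P \<in> topspace ?Z" for P
    using that gg_facts[of "fst P"] gg_facts[of "snd P"] unfolding tZ G1_def G2_def fibred_iff by auto
  define K where "K = (\<lambda>P. kk (snd (G1 P), fst (G2 P)))"
  have Kin: "(snd (G1 P), fst (G2 P)) \<in> fibred S R" if "P \<in> topspace ?Z" for P
    using mem[OF that] by (auto simp: fibred_iff)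
  have Kc: "continuous_map ?Z F K" unfolding K_def
    using continuous_map_compose[OF cont_into_fibred[OF bc cc] kk_cont] mem
    by (auto simp: o_def fibred_iff)
  have Kmem: "K P \<in> fibred R S \<and> fst (fst (K P)) = fst (snd (G1 P)) \<and> snd (snd (K P)) = snd (fst (G2 P))"
    if "P \<in> topspace ?Z" for P
    using kk(2)[OF Kin[OF that]] unfolding K_def by simp
  have Phi1: "continuous_map ?Z TR (\<lambda>P. rs_map (fst (G1 P), fst (K P)))"
    using continuous_map_compose[OF cont_into_fibred[OF ac continuous_map_compose[OF Kc cont_fibred_fst, unfolded o_def]] E_rs[OF ER]]
      mem Kmem by (auto simp: o_def fibred_iff)
  have Phi2: "continuous_map ?Z TS (\<lambda>P. rs_map (snd (K P), snd (G2 P)))"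
    using continuous_map_compose[OF cont_into_fibred[OF continuous_map_compose[OF Kc cont_fibred_snd, unfolded o_def] dc] E_rs[OF ES]]
      mem Kmem by (auto simp: o_def fibred_iff)
  have Psi: "continuous_map ?Z F (\<lambda>P. (rs_map (fst (G1 P), fst (K P)), rs_map (snd (K P), snd (G2 P))))"
    using cont_into_fibred[OF Phi1 Phi2] Kmem by (auto simp: rs_map_eq fibred_iff)
  have "continuous_map ?Z W0 (\<lambda>P. rs_map (rs_map (fst (G1 P), fst (K P)), rs_map (snd (K P), snd (G2 P))))"
    using continuous_map_compose[OF Psi homeomorphic_imp_continuous_map[OF m_homeo]] by (simp add: o_def)
  then show ?thesis
    by (rule continuous_map_eq) (use mem in \<open>auto simp: rs_map_eq\<close>)
qed

lemma W0_swap: "homeomorphic_map W0 W0 (\<lambda>(x, y). (y, x))"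
proof (rule homeomorphic_map_involution)
  let ?sw = "\<lambda>(x::'a, y::'a). (y, x)"
  have b: "continuous_map W0 TS (\<lambda>p. ?sw (snd (gg p)))"
    using continuous_map_compose[OF continuous_map_compose[OF gg_cont cont_fibred_snd] E_swap_cont[OF ES]]
    by (simp add: o_def)
  have a: "continuous_map W0 TR (\<lambda>p. ?sw (fst (gg p)))"
    using continuous_map_compose[OF continuous_map_compose[OF gg_cont cont_fibred_fst] E_swap_cont[OF ER]]
    by (simp add: o_def)
  have mem: "gg p \<in> fibred R S \<and> fst (fst (gg p)) = fst p \<and> snd (snd (gg p)) = snd p" if "p \<in> topspace W0" for p
    using gg_facts that top_W0 by auto
  have inS: "(?sw (snd (gg p)), ?sw (fst (gg p))) \<in> fibred S R" if "p \<in> topspace W0" for p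
    using mem[OF that] E_sym[OF ER] E_sym[OF ES] by (auto simp: fibred_iff split: prod.splits)
  have eqs: "snd (?sw (snd (gg p))) = fst (?sw (fst (gg p)))" if "p \<in> topspace W0" for p
    using mem[OF that] by (auto simp: fibred_iff case_prod_beta)
  have c: "continuous_map W0 F (\<lambda>p. kk (?sw (snd (gg p)), ?sw (fst (gg p))))"
    using continuous_map_compose[OF cont_into_fibred[OF b a eqs] kk_cont] by (simp add: o_def)
  have "continuous_map W0 W0 (\<lambda>p. rs_map (kk (?sw (snd (gg p)), ?sw (fst (gg p)))))"
    using continuous_map_compose[OF c homeomorphic_imp_continuous_map[OF m_homeo]] by (simp add: o_def)
  then show "continuous_map W0 W0 ?sw"
  proof (rule continuous_map_eq)
    fix p assume p: "p \<in> topspace W0"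
    show "rs_map (kk (?sw (snd (gg p)), ?sw (fst (gg p)))) = ?sw p"
      using kk(2)[OF inS[OF p]] mem[OF p] by (auto simp: rs_map_eq split: prod.splits)
  qed
qed auto

lemma pi1_lh: "local_homeomorphism_map F TR fst"
  unfolding local_homeomorphism_map_def
proof (intro conjI ballI)
  show "fst ` topspace F \<subseteq> topspace TR" using topF E_top[OF ER] by (auto simp: fibred_iff)
  fix w assume w: "w \<in> topspace F"
  then have sw: "snd w \<in> topspace TS" using topF E_top[OF ES] by (auto simp: fibred_iff)
  then obtain V where V: "openin TS V" "snd w \<in> V" "openin X (fst ` V)"
      "homeomorphic_map (subtopology TS V) (subtopology X (fst ` V)) fst"
    using E_lh[OF ES] unfolding local_homeomorphism_map_def by blast
  obtain \<sigma> where \<sigma>: "homeomorphic_maps (subtopology TS V) (subtopology X (fst ` V)) fst \<sigma>"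
    using V(4) homeomorphic_map_maps by blast
  have VS: "V \<subseteq> S" using openin_subset[OF V(1)] E_top[OF ES] by simp
  have fVX: "fst ` V \<subseteq> topspace X" using openin_subset[OF V(3)] .
  have \<sigma>c: "continuous_map (subtopology X (fst ` V)) (subtopology TS V) \<sigma>"
    and \<sigma>1: "\<And>v. v \<in> V \<Longrightarrow> \<sigma> (fst v) = v"
    using \<sigma> VS E_top[OF ES] fVX unfolding homeomorphic_maps_def by auto
  have \<sigma>2: "fst (\<sigma> y) = y" if "y \<in> fst ` V" for y
  proof -
    have "y \<in> topspace (subtopology X (fst ` V))" using that fVX by auto
    then show ?thesis using \<sigma> unfolding homeomorphic_maps_def by blast
  qed
  have \<sigma>3: "\<sigma> y \<in> V" if "y \<in> fst ` V" for y
  proof -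
    have y: "y \<in> topspace (subtopology X (fst ` V))" using that fVX by auto
    have "\<sigma> y \<in> topspace (subtopology TS V)" using continuous_map_image_subset_topspace[OF \<sigma>c] y by blast
    then show ?thesis by simp
  qed
  define N where "N = {u \<in> topspace F. snd u \<in> V}"
  define M where "M = {a \<in> R. snd a \<in> fst ` V}"
  have oN: "openin F N" unfolding N_def using cont_fibred_snd[of TR TS] V(1) unfolding continuous_map_def by blast
  have NM: "fst ` N = M"
  proof
    show "fst ` N \<subseteq> M" unfolding N_def M_def topF by (force simp: fibred_iff)
    show "M \<subseteq> fst ` N"
    proof
      fix a assume "a \<in> M"
      then obtain v where v: "a \<in> R" "v \<in> V" "snd a = fst v" unfolding M_def by auto
      then have "(a, v) \<in> N" unfolding N_def topF using VS by (auto simp: fibred_iff)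
      then show "a \<in> fst ` N" by force
    qed
  qed
  have oM: "openin TR M" unfolding M_def using E_snd[OF ER] V(3) E_top[OF ER]
    by (simp add: continuous_map_def)
  have "homeomorphic_maps (subtopology F N) (subtopology TR M) fst (\<lambda>a. (a, \<sigma> (snd a)))"
    unfolding homeomorphic_maps_def
  proof (intro conjI ballI)
    show "continuous_map (subtopology F N) (subtopology TR M) fst"
      unfolding continuous_map_in_subtopology
      using continuous_map_from_subtopology[OF cont_fibred_fst] NM by auto
    have s1: "continuous_map (subtopology TR M) (subtopology X (fst ` V)) snd"
      unfolding continuous_map_in_subtopology
      using continuous_map_from_subtopology[OF E_snd[OF ER]] M_def by auto
    have s2: "continuous_map (subtopology TR M) TS (\<lambda>a. \<sigma> (snd a))"
      using continuous_map_into_fulltopology[OF continuous_map_compose[OF s1 \<sigma>c]] by (simp add: o_def)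
    have "continuous_map (subtopology TR M) F (\<lambda>a. (a, \<sigma> (snd a)))"
      using cont_into_fibred[OF continuous_map_from_subtopology[OF continuous_map_id, unfolded id_def] s2]
      \<sigma>2 unfolding M_def by auto
    moreover have "(a, \<sigma> (snd a)) \<in> N" if "a \<in> topspace (subtopology TR M)" for a
      using that \<sigma>2 \<sigma>3 VS unfolding N_def M_def topF by (auto simp: fibred_iff)
    ultimately show "continuous_map (subtopology TR M) (subtopology F N) (\<lambda>a. (a, \<sigma> (snd a)))"
      unfolding continuous_map_in_subtopology by auto
    fix u assume "u \<in> topspace (subtopology F N)"
    then have "u \<in> fibred R S" "snd u \<in> V" unfolding N_def topF by auto
    then show "(fst u, \<sigma> (snd (fst u))) = u" using \<sigma>1 by (auto simp: fibred_iff)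
  qed auto
  then have "homeomorphic_map (subtopology F N) (subtopology TR (fst ` N)) fst"
    using homeomorphic_maps_map NM by blast
  show "\<exists>U. openin F U \<and> w \<in> U \<and> openin TR (fst ` U) \<and>
        homeomorphic_map (subtopology F U) (subtopology TR (fst ` U)) fst"
  proof -
    have "w \<in> N" unfolding N_def using w V(2) by auto
    then show ?thesis using oN oM NM \<open>homeomorphic_map (subtopology F N) (subtopology TR (fst ` N)) fst\<close>
      by (intro exI[of _ N]) auto
  qed
qed

lemma W0_lh: "local_homeomorphism_map W0 X fst"
proof -
  have "local_homeomorphism_map W0 X (fst \<circ> (fst \<circ> gg))"
    by (rule lh_compose[OF lh_compose[OF homeo_lh[OF gg_homeo] pi1_lh] E_lh[OF ER]])
  then show ?thesis by (rule lh_cong) (use gg_facts top_W0 in auto)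
qed

end


context trctx begin

lemma RS_equiv: "equiv (topspace X) (R O S)"
proof (rule equivI)
  show "R O S \<subseteq> topspace X \<times> topspace X" using E_sub[OF ER] E_sub[OF ES] by blast
  show "refl_on (topspace X) (R O S)"
    unfolding refl_on_def using E_refl[OF ER] E_refl[OF ES] by blast
  show "sym (R O S)"
  proof (rule symI)
    fix a b assume "(a, b) \<in> R O S"
    then obtain y where "(a, y) \<in> R" "(y, b) \<in> S" by auto
    then have "(b, y) \<in> S" "(y, a) \<in> R" using E_sym[OF ER] E_sym[OF ES] by auto
    then show "(b, a) \<in> R O S" using SR_RS by blast
  qed
  show "trans (R O S)"
  proof (rule transI)
    fix a b c assume "(a, b) \<in> R O S" "(b, c) \<in> R O S"
    then obtain y y' where "(a, y) \<in> R" "(y, b) \<in> S" "(b, y') \<in> R" "(y', c) \<in> S" by auto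
    moreover obtain u where "(y, u) \<in> R" "(u, y') \<in> S" using SR_RS[of y b y'] calculation by blast
    ultimately show "(a, c) \<in> R O S" using E_trans[OF ER] E_trans[OF ES] by blast
  qed
qed

lemma RS_countable: "countable_equiv_rel (topspace X) (R O S)"
  unfolding countable_equiv_rel_def
proof (intro conjI ballI RS_equiv)
  fix x assume x: "x \<in> topspace X"
  have cR: "countable (R `` {x})" using ER x unfolding etale_eqrel_def countable_equiv_rel_def by blast
  have cS: "countable (S `` {y})" if "y \<in> R `` {x}" for y
    using ES that E_sub[OF ER] unfolding etale_eqrel_def countable_equiv_rel_def by blast
  have "(R O S) `` {x} \<subseteq> (\<Union>y\<in>R `` {x}. S `` {y})" by auto
  moreover have "countable (\<Union>y\<in>R `` {x}. S `` {y})" using cR cS by (intro countable_UN) auto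
  ultimately show "countable ((R O S) `` {x})" using countable_subset by blast
qed

lemma R_sub: "R \<subseteq> R O S"
  using E_sub[OF ER] E_refl[OF ES] by blast

lemma S_sub: "S \<subseteq> R O S"
  using E_sub[OF ES] E_refl[OF ER] by blast

lemma R_open: "openin W0 R"
proof -
  have pt: "rs_map w \<in> R \<longleftrightarrow> snd w \<in> Id_on (topspace X)" if w: "w \<in> topspace F" for w
  proof -
    obtain x y z where ww: "w = ((x,y),(y,z))" "(x,y) \<in> R" "(y,z) \<in> S"
      using w topF by (auto simp: fibred_def)
    then have yX: "y \<in> topspace X" using E_sub[OF ES] by auto
    show ?thesis proof
      assume "rs_map w \<in> R"
      then have "(x, z) \<in> R" using ww by (simp add: rs_map_def)
      then have "(y, z) \<in> R" using ww E_sym[OF ER] E_trans[OF ER] by blast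
      then have "(y, z) \<in> Id_on (topspace X)" using ww RS_Id by blast
      then show "snd w \<in> Id_on (topspace X)" using w ww by simp
    next
      assume "snd w \<in> Id_on (topspace X)"
      then have "y = z" using ww by auto
      then show "rs_map w \<in> R" using w ww by (simp add: rs_map_def)
    qed
  qed
  have e: "{w \<in> topspace F. rs_map w \<in> R} = {w \<in> topspace F. snd w \<in> Id_on (topspace X)}"
    by (rule Collect_cong, rule conj_cong, rule refl, erule pt)
  have "openin F {w \<in> topspace F. snd w \<in> Id_on (topspace X)}"
    using cont_fibred_snd[of TR TS] E_diag_open[OF ES] unfolding continuous_map_def by blast
  then show ?thesis unfolding openin_W0 e using R_sub by simp
qed

lemma S_open: "openin W0 S"
proof -
  have pt: "rs_map w \<in> S \<longleftrightarrow> fst w \<in> Id_on (topspace X)" if w: "w \<in> topspace F" for w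
  proof -
    obtain x y z where ww: "w = ((x,y),(y,z))" "(x,y) \<in> R" "(y,z) \<in> S"
      using w topF by (auto simp: fibred_def)
    show ?thesis proof
      assume "rs_map w \<in> S"
      then have "(x, z) \<in> S" using ww by (simp add: rs_map_def)
      then have "(x, y) \<in> S" using ww E_sym[OF ES] E_trans[OF ES] by blast
      then have "(x, y) \<in> Id_on (topspace X)" using ww RS_Id by blast
      then show "fst w \<in> Id_on (topspace X)" using w ww by simp
    next
      assume "fst w \<in> Id_on (topspace X)"
      then have "x = y" using ww by auto
      then show "rs_map w \<in> S" using w ww by (simp add: rs_map_def)
    qed
  qed
  have e: "{w \<in> topspace F. rs_map w \<in> S} = {w \<in> topspace F. fst w \<in> Id_on (topspace X)}"
    by (rule Collect_cong, rule conj_cong, rule refl, erule pt)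
  have "openin F {w \<in> topspace F. fst w \<in> Id_on (topspace X)}"
    using cont_fibred_fst[of TR TS] E_diag_open[OF ER] unfolding continuous_map_def by blast
  then show ?thesis unfolding openin_W0 e using S_sub by simp
qed

lemma sub_R: "subtopology W0 R = TR"
proof -
  have c1: "continuous_map TR TS (\<lambda>a. (snd a, snd a))"
    using continuous_map_compose[OF E_snd[OF ER] E_unit[OF ES]] by (simp add: o_def)
  have c2: "continuous_map TR F (\<lambda>a. (a, (snd a, snd a)))"
    by (rule cont_into_fibred[OF continuous_map_id[unfolded id_def] c1]) simp
  have "continuous_map TR W0 (\<lambda>a. rs_map (a, (snd a, snd a)))"
    using continuous_map_compose[OF c2 homeomorphic_imp_continuous_map[OF m_homeo]] by (simp add: o_def)
  then have "continuous_map TR W0 id"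
    by (rule continuous_map_eq) (simp add: rs_map_def)
  then have c: "continuous_map TR (subtopology W0 R) id"
    unfolding continuous_map_in_subtopology using E_top[OF ER] by auto
  have "TR = subtopology W0 R"
  proof (rule lh_unique[OF _ c E_lh[OF ER] lh_subtop[OF W0_lh R_open]])
    show "topspace TR = topspace (subtopology W0 R)" using E_top[OF ER] top_W0 R_sub by auto
  qed
  then show ?thesis by simp
qed

lemma sub_S: "subtopology W0 S = TS"
proof -
  have c1: "continuous_map TS TR (\<lambda>b. (fst b, fst b))"
    using continuous_map_compose[OF E_fst[OF ES] E_unit[OF ER]] by (simp add: o_def)
  have c2: "continuous_map TS F (\<lambda>b. ((fst b, fst b), b))"
    by (rule cont_into_fibred[OF c1 continuous_map_id[unfolded id_def]]) simp
  have "continuous_map TS W0 (\<lambda>b. rs_map ((fst b, fst b), b))"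
    using continuous_map_compose[OF c2 homeomorphic_imp_continuous_map[OF m_homeo]] by (simp add: o_def)
  then have "continuous_map TS W0 id"
    by (rule continuous_map_eq) (simp add: rs_map_def)
  then have c: "continuous_map TS (subtopology W0 S) id"
    unfolding continuous_map_in_subtopology using E_top[OF ES] by auto
  have "TS = subtopology W0 S"
  proof (rule lh_unique[OF _ c E_lh[OF ES] lh_subtop[OF W0_lh S_open]])
    show "topspace TS = topspace (subtopology W0 S)" using E_top[OF ES] top_W0 S_sub by auto
  qed
  then show ?thesis by simp
qed

lemma unique:
  assumes EW: "etale_eqrel X (join_rel (topspace X) R S) W"
    and WR: "subtopology W R = TR" and WS: "subtopology W S = TS"
  shows "W = W0"
proof -
  have tW: "topspace W = R O S" using E_top[OF EW] J_eq by simp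
  have "F = subtopology (prod_topology (subtopology W R) (subtopology W S)) (fibred R S)"
    using F_sub WR WS by simp
  also have "\<dots> = subtopology (prod_topology W W) ((R \<times> S) \<inter> fibred R S)"
    by (simp add: subtopology_Times[symmetric] subtopology_subtopology)
  also have "(R \<times> S) \<inter> fibred R S = fibred (R O S) (R O S) \<inter> fibred R S"
    using R_sub S_sub by (auto simp: fibred_iff)
  also have "subtopology (prod_topology W W) (fibred (R O S) (R O S) \<inter> fibred R S)
     = subtopology (fibred_top W W) (fibred R S)"
    by (simp add: fibred_top_def tW subtopology_subtopology)
  finally have FW: "F = subtopology (fibred_top W W) (fibred R S)" .
  have cF: "continuous_map F W rs_map"
    unfolding FW by (rule continuous_map_from_subtopology[OF E_rs[OF EW]])
  have "continuous_map W0 W (rs_map \<circ> gg)"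
    by (rule continuous_map_compose[OF gg_cont cF])
  then have c: "continuous_map W0 W id"
    by (rule continuous_map_eq) (use gg_facts top_W0 in auto)
  have "W0 = W"
    by (rule lh_unique[OF _ c W0_lh E_lh[OF EW]]) (simp add: tW top_W0)
  then show ?thesis by simp
qed

end



theorem proposition3p3:
  fixes X :: "'a topology" and R S :: "('a \<times> 'a) set" and TR TS :: "('a \<times> 'a) topology"
  assumes "compact_space X" and "metrizable_space X" and "X dim_le 0"
    and "etale_eqrel X R TR" and "etale_eqrel X S TS"
    and "transverse X R TR S TS"
  shows "etale_eqrel X (join_rel (topspace X) R S) (join_top X R TR S TS)
     \<and> (ceer X R TR \<and> ceer X S TS \<longrightarrow> ceer X (join_rel (topspace X) R S) (join_top X R TR S TS))
     \<and> subtopology (join_top X R TR S TS) R = TR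
     \<and> subtopology (join_top X R TR S TS) S = TS
     \<and> (\<forall>W. etale_eqrel X (join_rel (topspace X) R S) W \<and> subtopology W R = TR \<and> subtopology W S = TS
            \<longrightarrow> W = join_top X R TR S TS)
     \<and> openin (join_top X R TR S TS) R \<and> openin (join_top X R TR S TS) S"
proof -
  interpret trctx X R S TR TS
    by unfold_locales (use assms metrizable_imp_Hausdorff_space in auto)
  have et: "etale_eqrel X (join_rel (topspace X) R S) (join_top X R TR S TS)"
    unfolding etale_eqrel_def J_eq
    using RS_countable top_W0 W0_props W0_rs W0_swap W0_lh by blast
  have ce: "ceer X R TR \<and> ceer X S TS \<longrightarrow> ceer X (join_rel (topspace X) R S) (join_top X R TR S TS)"
    using et W0_compact unfolding ceer_def by blast
  show ?thesis using et ce sub_R sub_S unique R_open S_open by blast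
qed


end
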